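(* Let $F=\{T_1,\dots,T_n\}$ be a finite family of reduction operators relative to a well-ordered set $(G,<)$. Then \[\mathrm{lt}(\mathrm{syz}(F))=\{e_{i,g_0}\mid 2\le i\le n\ \text{and}\ g_0\in\mathrm{red}(U_{i-1}\vee T_i)\},\] where $U_{i-1}=T_1\wedge\dots\wedge T_{i-1}$.
   Context: Let $\mathbb{K}$ be a field, $(G,<)$ a well-ordered set and $\mathbb{K}G$ the vector space with basis $G$. For $v\neq0$, $\mathrm{lt}(v)$ is the greatest element of $G$ appearing with nonzero coefficient in $v$. Extend $<$ to $\mathbb{K}G$: $u<v$ if $u=0$ and $v\neq0$, or if $\mathrm{lt}(u)<\mathrm{lt}(v)$; $u\le v$ means $u<v$ or $u=v$. A reduction operator is an idempotent linear endomorphism $T$ of $\mathbb{K}G$ with $T(g)\le g$ for all $g\in G$; $\mathrm{red}(T)=\{g\in G\mid T(g)\neq g\}$. For every subspace $V$ there is a unique reduction operator $\ker^{-1}(V)$ with kernel $V$; $T\wedge T'=\ker^{-1}(\ker T+\ker T')$, $T\vee T'=\ker^{-1}(\ker T\cap\ker T')$, and $T_1\wedge\dots\wedge T_k=\ker^{-1}(\sum\ker T_j)$; $\wedge F=T_1\wedge\dots\wedge T_n$. Let $\mathbf{ker}(F)=\ker T_1\times\dots\times\ker T_n$, $\pi_F(v_1,\dots,v_n)=v_1+\dots+v_n\in\ker(\wedge F)$ and $\mathrm{syz}(F)=\ker\pi_F$. For $g\in\mathrm{red}(T_i)$, $e_{i,g}$ is the tuple with $g-T_i(g)$ at position $i$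 and $0$ elsewhere; these form a basis of $\mathbf{ker}(F)$, well-ordered by $e_{i,g}\sqsubset e_{i',g'}$ iff $i<i'$, or $i=i'$ and $g<g'$. The leading term of a nonzero element of $\mathbf{ker}(F)$ is the $\sqsubset$-greatest $e_{i,g}$ appearing with nonzero coefficient in it, and $\mathrm{lt}(\mathrm{syz}(F))$ is the set of leading terms of nonzero elements of $\mathrm{syz}(F)$. *)

theory Defs
  imports "HOL-Library.Poly_Mapping"
begin

text \<open>The vector space KG with basis G is modelled by finitely supported
functions from G to K (G a well-ordered type, K a field).\<close>

definition basisv :: "'g \<Rightarrow> ('g \<Rightarrow>\<^sub>0 'k::field)" where
  "basisv g = Poly_Mapping.single g 1"

definition smultv :: "'k::field \<Rightarrow> ('g \<Rightarrow>\<^sub>0 'k) \<Rightarrow> ('g \<Rightarrow>\<^sub>0 'k)" where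
  "smultv c v = Poly_Mapping.map (\<lambda>x. c * x) v"

definition ltv :: "('g::wellorder \<Rightarrow>\<^sub>0 'k::field) \<Rightarrow> 'g" where
  "ltv v = Max (Poly_Mapping.keys v)"

definition vless :: "('g::wellorder \<Rightarrow>\<^sub>0 'k::field) \<Rightarrow> ('g \<Rightarrow>\<^sub>0 'k) \<Rightarrow> bool" where
  "vless u v \<longleftrightarrow> (u = 0 \<and> v \<noteq> 0) \<or> (u \<noteq> 0 \<and> v \<noteq> 0 \<and> ltv u < ltv v)"

definition vle :: "('g::wellorder \<Rightarrow>\<^sub>0 'k::field) \<Rightarrow> ('g \<Rightarrow>\<^sub>0 'k) \<Rightarrow> bool" where
  "vle u v \<longleftrightarrow> vless u v \<or> u = v"

definition linear_endo :: "(('g \<Rightarrow>\<^sub>0 'k::field) \<Rightarrow> ('g \<Rightarrow>\<^sub>0 'k)) \<Rightarrow> bool" where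
  "linear_endo T \<longleftrightarrow> (\<forall>u v. T (u + v) = T u + T v) \<and> (\<forall>c v. T (smultv c v) = smultv c (T v))"

definition reduction_operator :: "(('g::wellorder \<Rightarrow>\<^sub>0 'k::field) \<Rightarrow> ('g \<Rightarrow>\<^sub>0 'k)) \<Rightarrow> bool" where
  "reduction_operator T \<longleftrightarrow> linear_endo T \<and> (\<forall>v. T (T v) = T v) \<and>
     (\<forall>g. vle (T (basisv g)) (basisv g))"

definition red :: "(('g::wellorder \<Rightarrow>\<^sub>0 'k::field) \<Rightarrow> ('g \<Rightarrow>\<^sub>0 'k)) \<Rightarrow> 'g set" where
  "red T = {g. T (basisv g) \<noteq> basisv g}"

definition kernel :: "(('g \<Rightarrow>\<^sub>0 'k::field) \<Rightarrow> ('g \<Rightarrow>\<^sub>0 'k)) \<Rightarrow> ('g \<Rightarrow>\<^sub>0 'k) set" where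
  "kernel T = {v. T v = 0}"

definition ker_inv :: "('g::wellorder \<Rightarrow>\<^sub>0 'k::field) set \<Rightarrow> (('g \<Rightarrow>\<^sub>0 'k) \<Rightarrow> ('g \<Rightarrow>\<^sub>0 'k))" where
  "ker_inv V = (THE T. reduction_operator T \<and> kernel T = V)"

definition sum_kernels :: "(nat \<Rightarrow> (('g \<Rightarrow>\<^sub>0 'k::field) \<Rightarrow> ('g \<Rightarrow>\<^sub>0 'k))) \<Rightarrow> nat set \<Rightarrow> ('g \<Rightarrow>\<^sub>0 'k) set" where
  "sum_kernels T I = {v. \<exists>f. (\<forall>j\<in>I. f j \<in> kernel (T j)) \<and> v = (\<Sum>j\<in>I. f j)}"

definition meet_ops :: "(nat \<Rightarrow> (('g::wellorder \<Rightarrow>\<^sub>0 'k::field) \<Rightarrow> ('g \<Rightarrow>\<^sub>0 'k))) \<Rightarrow> nat set \<Rightarrow> (('g \<Rightarrow>\<^sub>0 'k) \<Rightarrow> ('g \<Rightarrow>\<^sub>0 'k))" where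
  "meet_ops T I = ker_inv (sum_kernels T I)"

definition join_op :: "(('g::wellorder \<Rightarrow>\<^sub>0 'k::field) \<Rightarrow> ('g \<Rightarrow>\<^sub>0 'k)) \<Rightarrow> (('g \<Rightarrow>\<^sub>0 'k) \<Rightarrow> ('g \<Rightarrow>\<^sub>0 'k)) \<Rightarrow> (('g \<Rightarrow>\<^sub>0 'k) \<Rightarrow> ('g \<Rightarrow>\<^sub>0 'k))" where
  "join_op S T = ker_inv (kernel S \<inter> kernel T)"

text \<open>Tuples (v_1,...,v_n) are functions nat \<Rightarrow> vector, zero outside 1..n.\<close>
definition kerF :: "(nat \<Rightarrow> (('g \<Rightarrow>\<^sub>0 'k::field) \<Rightarrow> ('g \<Rightarrow>\<^sub>0 'k))) \<Rightarrow> nat \<Rightarrow> (nat \<Rightarrow> ('g \<Rightarrow>\<^sub>0 'k)) set" where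
  "kerF T n = {v. (\<forall>j\<in>{1..n}. v j \<in> kernel (T j)) \<and> (\<forall>j. j \<notin> {1..n} \<longrightarrow> v j = 0)}"

definition syz :: "(nat \<Rightarrow> (('g \<Rightarrow>\<^sub>0 'k::field) \<Rightarrow> ('g \<Rightarrow>\<^sub>0 'k))) \<Rightarrow> nat \<Rightarrow> (nat \<Rightarrow> ('g \<Rightarrow>\<^sub>0 'k)) set" where
  "syz T n = {v \<in> kerF T n. (\<Sum>j\<in>{1..n}. v j) = 0}"

definition e_vec :: "(nat \<Rightarrow> (('g \<Rightarrow>\<^sub>0 'k::field) \<Rightarrow> ('g \<Rightarrow>\<^sub>0 'k))) \<Rightarrow> nat \<Rightarrow> 'g \<Rightarrow> (nat \<Rightarrow> ('g \<Rightarrow>\<^sub>0 'k))" where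
  "e_vec T i g = (\<lambda>j. if j = i then basisv g - T i (basisv g) else 0)"

definition sqsub :: "nat \<times> 'g::wellorder \<Rightarrow> nat \<times> 'g \<Rightarrow> bool" where
  "sqsub p q \<longleftrightarrow> fst p < fst q \<or> (fst p = fst q \<and> snd p < snd q)"

text \<open>c gives the coordinates of w in the basis e of ker(F)\<close>
definition coords :: "(nat \<Rightarrow> (('g::wellorder \<Rightarrow>\<^sub>0 'k::field) \<Rightarrow> ('g \<Rightarrow>\<^sub>0 'k))) \<Rightarrow> nat \<Rightarrow> (nat \<times> 'g \<Rightarrow> 'k) \<Rightarrow> (nat \<Rightarrow> ('g \<Rightarrow>\<^sub>0 'k)) \<Rightarrow> bool" where
  "coords T n c w \<longleftrightarrow> finite {p. c p \<noteq> 0} \<and>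
     {p. c p \<noteq> 0} \<subseteq> {(j, h). j \<in> {1..n} \<and> h \<in> red (T j)} \<and>
     w = (\<lambda>j. \<Sum>p\<in>{p. c p \<noteq> 0}. smultv (c p) (e_vec T (fst p) (snd p) j))"

definition lt_syz :: "(nat \<Rightarrow> (('g::wellorder \<Rightarrow>\<^sub>0 'k::field) \<Rightarrow> ('g \<Rightarrow>\<^sub>0 'k))) \<Rightarrow> nat \<Rightarrow> (nat \<Rightarrow> ('g \<Rightarrow>\<^sub>0 'k)) set" where
  "lt_syz T n = {e_vec T i g | i g. \<exists>w\<in>syz T n. (\<exists>j. w j \<noteq> 0) \<and> (\<exists>c. coords T n c w \<and> c (i, g) \<noteq> 0 \<and>
       (\<forall>p. c p \<noteq> 0 \<longrightarrow> p \<noteq> (i, g) \<longrightarrow> sqsub p (i, g)))}"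

end

theory Submission
  imports Defs
begin


abbreviation lk where "lk \<equiv> Poly_Mapping.lookup"
abbreviation ks where "ks \<equiv> Poly_Mapping.keys"
declare in_keys_lookup_in_range[simp del]

lemma lookup_smultv[simp]: "lk (smultv c v) k = c * lk v k"
  by (simp add: smultv_def Poly_Mapping.map.rep_eq when_def)

lemma lookup_basisv: "lk (basisv g) k = (if k = g then (1::'k::field) else 0)"
  by (simp add: basisv_def Poly_Mapping.lookup_single when_def)

lemma keys_basisv[simp]: "ks (basisv g :: _ \<Rightarrow>\<^sub>0 'k::field) = {g}"
  by (simp add: basisv_def)

lemma expand: "v = (\<Sum>h\<in>ks v. smultv (lk v h) (basisv h))"
proof (rule poly_mapping_eqI)
  fix k
  have e: "\<And>h. lk (smultv (lk v h) (basisv h)) k = (if h = k then lk v h else 0)"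
    by (simp add: lookup_basisv)
  have "lk (\<Sum>h\<in>ks v. smultv (lk v h) (basisv h)) k = (\<Sum>h\<in>ks v. if h = k then lk v h else 0)"
    by (simp only: lookup_sum e)
  also have "\<dots> = lk v k" by (simp add: sum.delta' in_keys_iff)
  finally show "lk v k = lk (\<Sum>h\<in>ks v. smultv (lk v h) (basisv h)) k" by simp
qed

lemma smultv_add: "smultv c (u + v) = smultv c u + smultv c v"
  by (rule poly_mapping_eqI) (simp add: lookup_add distrib_left)
lemma smultv_zero[simp]: "smultv c 0 = 0"
  by (rule poly_mapping_eqI) simp
lemma smultv_zero2[simp]: "smultv 0 v = 0"
  by (rule poly_mapping_eqI) simp
lemma smultv_one[simp]: "smultv 1 v = v"
  by (rule poly_mapping_eqI) simp
lemma smultv_m1: "smultv (-1) v = - v"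
  by (rule poly_mapping_eqI) simp
lemma smultv_smultv[simp]: "smultv a (smultv b v) = smultv (a*b) v"
  by (rule poly_mapping_eqI) simp
lemma smultv_sum: "smultv c (sum f A) = (\<Sum>a\<in>A. smultv c (f a))"
  by (rule poly_mapping_eqI) (simp add: lookup_sum sum_distrib_left)
lemma keys_smultv: "ks (smultv c v) \<subseteq> ks v"
  by (auto simp: in_keys_iff)

definition subsp :: "('g \<Rightarrow>\<^sub>0 'k::field) set \<Rightarrow> bool" where
  "subsp V \<longleftrightarrow> 0 \<in> V \<and> (\<forall>u\<in>V. \<forall>v\<in>V. u + v \<in> V) \<and> (\<forall>c. \<forall>v\<in>V. smultv c v \<in> V)"

lemma subsp_neg: "subsp V \<Longrightarrow> v \<in> V \<Longrightarrow> - v \<in> V"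
  unfolding subsp_def by (metis smultv_m1)
lemma subsp_add: "subsp V \<Longrightarrow> u \<in> V \<Longrightarrow> v \<in> V \<Longrightarrow> u + v \<in> V"
  unfolding subsp_def by blast
lemma subsp_smult: "subsp V \<Longrightarrow> v \<in> V \<Longrightarrow> smultv c v \<in> V"
  unfolding subsp_def by blast
lemma subsp_zero: "subsp V \<Longrightarrow> 0 \<in> V"
  unfolding subsp_def by blast
lemma subsp_diff: "subsp V \<Longrightarrow> u \<in> V \<Longrightarrow> v \<in> V \<Longrightarrow> u - v \<in> V"
  by (metis diff_conv_add_uminus subsp_add subsp_neg)
lemma subsp_sum: "subsp V \<Longrightarrow> (\<And>a. a \<in> A \<Longrightarrow> f a \<in> V) \<Longrightarrow> sum f A \<in> V"
  by (induction A rule: infinite_finite_induct) (auto simp: subsp_zero subsp_add)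

lemma lin_add: "linear_endo T \<Longrightarrow> T (u + v) = T u + T v"
  unfolding linear_endo_def by blast
lemma lin_smult: "linear_endo T \<Longrightarrow> T (smultv c v) = smultv c (T v)"
  unfolding linear_endo_def by blast
lemma lin_zero: "linear_endo T \<Longrightarrow> T 0 = 0"
  by (metis add_cancel_right_right add_0 lin_add)
lemma lin_neg: "linear_endo T \<Longrightarrow> T (- v) = - T v"
  by (metis lin_smult smultv_m1)
lemma lin_diff: "linear_endo T \<Longrightarrow> T (u - v) = T u - T v"
  by (metis diff_conv_add_uminus lin_add lin_neg)
lemma lin_sum: "linear_endo T \<Longrightarrow> T (sum f A) = (\<Sum>a\<in>A. T (f a))"
  by (induction A rule: infinite_finite_induct) (auto simp: lin_zero lin_add)
lemma lin_expand: "linear_endo T \<Longrightarrow> T v = (\<Sum>h\<in>ks v. smultv (lk v h) (T (basisv h)))"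
  by (subst expand) (simp add: lin_sum lin_smult)

lemma kernel_subsp: "linear_endo T \<Longrightarrow> subsp (kernel T)"
  unfolding subsp_def kernel_def by (auto simp: lin_zero lin_add lin_smult)

lemma keys_sum_sub: "(\<And>a. a \<in> A \<Longrightarrow> ks (f a) \<subseteq> B) \<Longrightarrow> ks (sum f A) \<subseteq> B"
  using keys_sum[of f A] by blast

lemma ltv_in: "v \<noteq> 0 \<Longrightarrow> ltv v \<in> ks v"
  unfolding ltv_def by (rule Max_in) auto
lemma ltv_ge: "x \<in> ks v \<Longrightarrow> x \<le> ltv v"
  unfolding ltv_def by (rule Max_ge) auto
lemma ltv_eqI: "g \<in> ks v \<Longrightarrow> (\<And>x. x \<in> ks v \<Longrightarrow> x \<le> g) \<Longrightarrow> ltv v = g"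
  unfolding ltv_def by (rule Max_eqI) auto
lemma ltv_basisv[simp]: "ltv (basisv g :: _ \<Rightarrow>\<^sub>0 'k::field) = g"
  by (rule ltv_eqI) auto

lemma ro_lin: "reduction_operator R \<Longrightarrow> linear_endo R"
  unfolding reduction_operator_def by blast
lemma ro_idem: "reduction_operator R \<Longrightarrow> R (R v) = R v"
  unfolding reduction_operator_def by blast
lemma ro_vle: "reduction_operator R \<Longrightarrow> vle (R (basisv g)) (basisv g)"
  unfolding reduction_operator_def by blast

lemma ro_red_lt: assumes "reduction_operator R" "h \<in> red R" "x \<in> ks (R (basisv h))"
  shows "x < h"
proof -
  have ne: "R (basisv h) \<noteq> basisv h" using assms(2) by (simp add: red_def)
  have "R (basisv h) \<noteq> 0" using assms(3) by auto
  with ro_vle[OF assms(1), of h] ne have "ltv (R (basisv h)) < h"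
    by (auto simp: vle_def vless_def)
  with ltv_ge[OF assms(3)] show ?thesis by simp
qed

lemma ro_basis_le: assumes "reduction_operator R" "x \<in> ks (R (basisv h))"
  shows "x \<le> h"
proof (cases "h \<in> red R")
  case True then show ?thesis using ro_red_lt[OF assms(1) True assms(2)] by simp
next
  case False then have "R (basisv h) = basisv h" by (simp add: red_def)
  then show ?thesis using assms(2) by simp
qed

lemma ro_basis_diag: assumes "reduction_operator R"
  shows "lk (R (basisv h)) h = (if h \<in> red R then 0 else 1)"
proof (cases "h \<in> red R")
  case True
  then have "h \<notin> ks (R (basisv h))" using ro_red_lt[OF assms True] by blast
  then show ?thesis using True by (simp add: in_keys_iff)
next
  case False then have "R (basisv h) = basisv h" by (simp add: red_def)
  then show ?thesis using False by (simp add: lookup_basisv)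
qed

lemma ro_coef: assumes R: "reduction_operator R" and le: "\<And>x. x \<in> ks u \<Longrightarrow> x \<le> g"
  shows "lk (R u) g = (if g \<in> red R then 0 else lk u g)"
    and "\<And>x. x \<in> ks (R u) \<Longrightarrow> x \<le> g"
proof -
  have eq: "R u = (\<Sum>h\<in>ks u. smultv (lk u h) (R (basisv h)))"
    using lin_expand[OF ro_lin[OF R]] .
  have "lk (R u) g = (\<Sum>h\<in>ks u. lk u h * lk (R (basisv h)) g)"
    by (subst eq) (simp add: lookup_sum)
  also have "\<dots> = (\<Sum>h\<in>ks u. if h = g then lk u h * (if g \<in> red R then 0 else 1) else 0)"
  proof (rule sum.cong)
    fix h assume h: "h \<in> ks u"
    show "lk u h * lk (R (basisv h)) g = (if h = g then lk u h * (if g \<in> red R then 0 else 1) else 0)"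
    proof (cases "h = g")
      case True then show ?thesis using ro_basis_diag[OF R] by simp
    next
      case False
      then have "h < g" using le[OF h] by simp
      then have "g \<notin> ks (R (basisv h))" using ro_basis_le[OF R] by (meson leD)
      then show ?thesis using False by (simp add: in_keys_iff)
    qed
  qed simp
  also have "\<dots> = (if g \<in> ks u then lk u g * (if g \<in> red R then 0 else 1) else 0)"
    by (rule sum.delta[OF finite_keys])
  also have "\<dots> = (if g \<in> red R then 0 else lk u g)"
  proof (cases "g \<in> ks u")
    case False then have "lk u g = 0" by (meson not_in_keys_iff_lookup_eq_zero)
    then show ?thesis using False by (simp only: if_False mult_zero_left if_cancel)
  next
    case True then show ?thesis by (cases "g \<in> red R") (simp_all only: if_True if_False mult_1_right mult_zero_right True)
  qed
  finally show "lk (R u) g = (if g \<in> red R then 0 else lk u g)" .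
  have "ks (\<Sum>h\<in>ks u. smultv (lk u h) (R (basisv h))) \<subseteq> {..g}"
  proof (rule keys_sum_sub)
    fix h assume h: "h \<in> ks u"
    show "ks (smultv (lk u h) (R (basisv h))) \<subseteq> {..g}"
    proof
      fix x assume "x \<in> ks (smultv (lk u h) (R (basisv h)))"
      then have "x \<in> ks (R (basisv h))" by (rule subsetD[OF keys_smultv])
      then have "x \<le> h" by (rule ro_basis_le[OF R])
      then show "x \<in> {..g}" using le[OF h] order.trans atMost_iff by metis
    qed
  qed
  then have "ks (R u) \<subseteq> {..g}" by (simp only: eq[symmetric])
  then show "\<And>x. x \<in> ks (R u) \<Longrightarrow> x \<le> g" using atMost_iff by blast
qed

lemma ro_kernel_lt: assumes R: "reduction_operator R" and v: "R v = 0" "v \<noteq> 0"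
  shows "ltv v \<in> red R"
proof (rule ccontr)
  assume "ltv v \<notin> red R"
  then have "lk (R v) (ltv v) = lk v (ltv v)" using ro_coef(1)[OF R, of v "ltv v"] ltv_ge by auto
  then show False using v ltv_in[OF v(2)] by (simp add: in_keys_iff)
qed

lemma ro_image_basis: assumes R: "reduction_operator R"
  shows "ks (R (basisv h)) \<inter> red R = {}"
proof (induction h rule: less_induct)
  case (less h)
  show ?case
  proof (cases "h \<in> red R")
    case False then have "R (basisv h) = basisv h" by (simp add: red_def)
    then show ?thesis using False by simp
  next
    case True
    let ?y = "R (basisv h)"
    have "?y = R ?y" using ro_idem[OF R] by simp
    also have "\<dots> = (\<Sum>k\<in>ks ?y. smultv (lk ?y k) (R (basisv k)))"
      using lin_expand[OF ro_lin[OF R]] .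
    finally have eq: "?y = \<dots>" .
    have "ks (\<Sum>k\<in>ks ?y. smultv (lk ?y k) (R (basisv k))) \<subseteq> - red R"
    proof (rule keys_sum_sub)
      fix k assume "k \<in> ks ?y"
      then have "k < h" using ro_red_lt[OF R True] by blast
      then have "ks (R (basisv k)) \<subseteq> - red R"
        using less.IH[of k] by blast
      then show "ks (smultv (lk ?y k) (R (basisv k))) \<subseteq> - red R"
        using keys_smultv[of "lk ?y k" "R (basisv k)"] by (rule_tac order.trans) 
    qed
    then have "ks ?y \<subseteq> - red R" by (simp only: eq[symmetric])
    then show ?thesis by blast
  qed
qed

lemma ro_image: assumes R: "reduction_operator R"
  shows "ks (R u) \<inter> red R = {}"
proof -
  have "ks (\<Sum>k\<in>ks u. smultv (lk u k) (R (basisv k))) \<subseteq> - red R"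
  proof (rule keys_sum_sub)
    fix k assume "k \<in> ks u"
    have "ks (R (basisv k)) \<subseteq> - red R"
      using ro_image_basis[OF R, of k] by blast
    then show "ks (smultv (lk u k) (R (basisv k))) \<subseteq> - red R"
      using keys_smultv[of "lk u k" "R (basisv k)"] by (rule_tac order.trans) 
  qed
  then show ?thesis using lin_expand[OF ro_lin[OF R], of u] by auto
qed



lemma keys_diff': "ks (a - b) \<subseteq> ks a \<union> ks (b :: 'g \<Rightarrow>\<^sub>0 'k::field)"
proof
  fix x assume "x \<in> ks (a - b)"
  then have "lk a x - lk b x \<noteq> 0" by (metis in_keys_iff lookup_minus)
  then show "x \<in> ks a \<union> ks b" by (metis UnI1 UnI2 diff_self in_keys_iff)
qed

definition bv :: "(('g::wellorder \<Rightarrow>\<^sub>0 'k::field) \<Rightarrow> ('g \<Rightarrow>\<^sub>0 'k)) \<Rightarrow> 'g \<Rightarrow> ('g \<Rightarrow>\<^sub>0 'k)" where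
  "bv R h = basisv h - R (basisv h)"

lemma bv_keys: assumes R: "reduction_operator R" and x: "x \<in> ks (bv R h)" shows "x \<le> h"
proof -
  have "x = h \<or> x \<in> ks (R (basisv h))"
    using keys_diff'[of "basisv h" "R (basisv h)"] x unfolding bv_def keys_basisv by blast
  then show ?thesis using ro_basis_le[OF R, of x h] by blast
qed

lemma bv_diag: assumes R: "reduction_operator R" and h: "h \<in> red R" shows "lk (bv R h) h = 1"
  using ro_basis_diag[OF R, of h] h by (simp add: bv_def lookup_minus lookup_basisv)

lemma bv_ker: assumes R: "reduction_operator R" shows "R (bv R h) = 0"
  unfolding bv_def by (simp add: lin_diff[OF ro_lin[OF R]] ro_idem[OF R])

lemma diff_keys_lt:
  fixes u w :: "'g::wellorder \<Rightarrow>\<^sub>0 'k::field"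
  assumes "\<And>x. x \<in> ks u \<Longrightarrow> x \<le> g" "\<And>x. x \<in> ks w \<Longrightarrow> x \<le> g" "lk u g = lk w g"
    and x: "x \<in> ks (u - w)"
  shows "x < g"
proof -
  have "x \<in> ks u \<union> ks w" using x by (rule subsetD[OF keys_diff'])
  then have "x \<le> g" using assms(1,2) by blast
  moreover have "x \<noteq> g"
  proof
    assume "x = g"
    then have "lk (u - w) x = 0" using assms(3) by (simp add: lookup_minus)
    then show False using x by (meson in_keys_iff)
  qed
  ultimately show ?thesis by simp
qed

lemma lead_sum:
  assumes R: "reduction_operator R" and fin: "finite S" and ne: "S \<noteq> {}" and sub: "S \<subseteq> red R"
    and nz: "\<And>h. h \<in> S \<Longrightarrow> a h \<noteq> 0"
    and v: "v = (\<Sum>h\<in>S. smultv (a h) (bv R h))"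
  shows "v \<noteq> 0" "ltv v = Max S"
proof -
  let ?m = "Max S"
  have mS: "?m \<in> S" using fin ne by simp
  have "lk v ?m = (\<Sum>h\<in>S. a h * lk (bv R h) ?m)" using v by (simp add: lookup_sum)
  also have "\<dots> = (\<Sum>h\<in>S. if h = ?m then a h else 0)"
  proof (rule sum.cong)
    fix h assume h: "h \<in> S"
    show "a h * lk (bv R h) ?m = (if h = ?m then a h else 0)"
    proof (cases "h = ?m")
      case True then show ?thesis using bv_diag[OF R] h sub by auto
    next
      case False
      then have "h < ?m" using h fin by (meson Max_ge order.not_eq_order_implies_strict)
      then have "?m \<notin> ks (bv R h)" using bv_keys[OF R] by (meson leD)
      then have "lk (bv R h) ?m = 0" by (meson not_in_keys_iff_lookup_eq_zero)
      then show ?thesis using False by (simp only: if_False mult_zero_right)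
    qed
  qed simp
  also have "\<dots> = a ?m" using sum.delta[OF fin, of ?m a] mS by (simp only: if_True)
  finally have c: "lk v ?m = a ?m" .
  then have mk: "?m \<in> ks v" using nz[OF mS] by (metis in_keys_iff)
  then show "v \<noteq> 0" by (metis keys_zero empty_iff)
  have "ks v \<subseteq> {..?m}" unfolding v
  proof (rule keys_sum_sub)
    fix h assume h: "h \<in> S"
    show "ks (smultv (a h) (bv R h)) \<subseteq> {..?m}"
    proof
      fix x assume "x \<in> ks (smultv (a h) (bv R h))"
      then have "x \<in> ks (bv R h)" by (rule subsetD[OF keys_smultv])
      then have "x \<le> h" by (rule bv_keys[OF R])
      moreover have "h \<le> ?m" using h fin by (rule Max_ge[rotated])
      ultimately show "x \<in> {..?m}" using order.trans atMost_iff by metis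
    qed
  qed
  then show "ltv v = Max S" using mk by (intro ltv_eqI) (auto simp del: in_keys_lookup_in_range)
qed



lemma rep_bound:
  fixes R :: "('g::wellorder \<Rightarrow>\<^sub>0 'k::field) \<Rightarrow> ('g \<Rightarrow>\<^sub>0 'k)"
  assumes R: "reduction_operator R"
  shows "\<forall>v. R v = 0 \<longrightarrow> (\<forall>x\<in>ks v. x \<le> g) \<longrightarrow>
     (\<exists>S a. finite S \<and> S \<subseteq> red R \<and> S \<subseteq> {..g} \<and> (\<forall>h\<in>S. a h \<noteq> (0::'k)) \<and>
        v = (\<Sum>h\<in>S. smultv (a h) (bv R h)))"
proof (induction g rule: less_induct)
  case (less g)
  have small: "\<exists>S a. finite S \<and> S \<subseteq> red R \<and> S \<subseteq> {..<g} \<and> (\<forall>h\<in>S. a h \<noteq> (0::'k)) \<and>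
        v' = (\<Sum>h\<in>S. smultv (a h) (bv R h))"
    if v': "R v' = 0" "\<forall>x\<in>ks v'. x < g" for v'
  proof (cases "v' = 0")
    case True then show ?thesis by (intro exI[of _ "{}"]) auto
  next
    case False
    have lt: "ltv v' < g" using v'(2) ltv_in[OF False] by blast
    have "\<forall>x\<in>ks v'. x \<le> ltv v'" using ltv_ge by blast
    then have ex: "\<exists>S a. finite S \<and> S \<subseteq> red R \<and> S \<subseteq> {..ltv v'} \<and> (\<forall>h\<in>S. a h \<noteq> (0::'k)) \<and>
        v' = (\<Sum>h\<in>S. smultv (a h) (bv R h))"
      using mp[OF mp[OF spec[OF less.IH[OF lt], of v'] v'(1)]] by blast
    then obtain S a where S: "finite S" "S \<subseteq> red R" "S \<subseteq> {..ltv v'}" "\<forall>h\<in>S. a h \<noteq> (0::'k)"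
        "v' = (\<Sum>h\<in>S. smultv (a h) (bv R h))" by blast
    have "S \<subseteq> {..<g}" using S(3) lt by auto
    then show ?thesis using S by blast
  qed
  show ?case
  proof (intro allI impI)
    fix v :: "'g \<Rightarrow>\<^sub>0 'k" assume v: "R v = 0" "\<forall>x\<in>ks v. x \<le> g"
    show "\<exists>S a. finite S \<and> S \<subseteq> red R \<and> S \<subseteq> {..g} \<and> (\<forall>h\<in>S. a h \<noteq> 0) \<and>
        v = (\<Sum>h\<in>S. smultv (a h) (bv R h))"
    proof (cases "lk v g = 0")
      case True
      have "\<forall>x\<in>ks v. x < g"
      proof
        fix x assume x: "x \<in> ks v"
        then have "x \<noteq> g" using True by (metis in_keys_iff)
        then show "x < g" using v(2) x by (meson order.not_eq_order_implies_strict)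
      qed
      from small[OF v(1) this] obtain S a where S: "finite S" "S \<subseteq> red R" "S \<subseteq> {..<g}" "\<forall>h\<in>S. a h \<noteq> (0::'k)"
        "v = (\<Sum>h\<in>S. smultv (a h) (bv R h))" by blast
      have "S \<subseteq> {..g}" using S(3) by (meson atMost_iff lessThan_iff less_imp_le subset_iff)
      then show ?thesis using S by blast
    next
      case False
      let ?c = "lk v g"
      have gr: "g \<in> red R"
      proof (rule ccontr)
        assume "g \<notin> red R"
        have le: "\<And>x. x \<in> ks v \<Longrightarrow> x \<le> g" using v(2) by blast
        have "lk (R v) g = lk v g" using ro_coef(1)[OF R le] \<open>g \<notin> red R\<close> by (simp only: if_False)
        then show False using v(1) False by (metis lookup_zero)
      qed
      define v' where "v' = v - smultv ?c (bv R g)"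
      have Rv': "R v' = 0" unfolding v'_def
        using v(1) bv_ker[OF R] by (simp add: lin_diff[OF ro_lin[OF R]] lin_smult[OF ro_lin[OF R]])
      have "\<forall>x\<in>ks v'. x < g"
      proof
        fix x assume x: "x \<in> ks v'"
        show "x < g"
        proof (rule diff_keys_lt[of v g "smultv ?c (bv R g)"])
          show "\<And>x. x \<in> ks v \<Longrightarrow> x \<le> g" using v(2) by blast
          show "\<And>y. y \<in> ks (smultv ?c (bv R g)) \<Longrightarrow> y \<le> g"
          proof -
            fix y assume "y \<in> ks (smultv ?c (bv R g))"
            then have "y \<in> ks (bv R g)" by (rule subsetD[OF keys_smultv])
            then show "y \<le> g" by (rule bv_keys[OF R])
          qed
          show "lk v g = lk (smultv ?c (bv R g)) g" using bv_diag[OF R gr] by (simp only: lookup_smultv mult_1_right)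
          show "x \<in> ks (v - smultv ?c (bv R g))" using x unfolding v'_def .
        qed
      qed
      from small[OF Rv' this] obtain S a where S: "finite S" "S \<subseteq> red R" "S \<subseteq> {..<g}" "\<forall>h\<in>S. a h \<noteq> (0::'k)"
        "v' = (\<Sum>h\<in>S. smultv (a h) (bv R h))" by blast
      have gS: "g \<notin> S" using S(3) by (meson lessThan_iff less_irrefl subsetD)
      let ?a = "a(g := ?c)"
      have "(\<Sum>h\<in>insert g S. smultv (?a h) (bv R h)) = smultv ?c (bv R g) + (\<Sum>h\<in>S. smultv (?a h) (bv R h))"
        by (subst sum.insert[OF S(1) gS]) (simp only: fun_upd_same)
      also have "(\<Sum>h\<in>S. smultv (?a h) (bv R h)) = (\<Sum>h\<in>S. smultv (a h) (bv R h))"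
        using gS by (intro sum.cong) (simp, metis fun_upd_other)
      also have "smultv ?c (bv R g) + (\<Sum>h\<in>S. smultv (a h) (bv R h)) = v" 
        unfolding S(5)[symmetric] v'_def by (metis add.commute diff_add_cancel)
      finally have "v = (\<Sum>h\<in>insert g S. smultv (?a h) (bv R h))" by (rule sym)
      moreover have "finite (insert g S)" using S(1) by blast
      moreover have "insert g S \<subseteq> red R" using S(2) gr by blast
      moreover have "insert g S \<subseteq> {..g}" using S(3) by (meson atMost_iff insert_subset lessThan_iff less_imp_le order_refl subset_iff)
      moreover have "\<forall>h\<in>insert g S. ?a h \<noteq> 0" using S(4) False by (metis fun_upd_other fun_upd_same insert_iff)
      ultimately show ?thesis by blast
    qed
  qed
qed

lemma rep_exists:
  assumes R: "reduction_operator R" and v: "R v = 0"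
  shows "\<exists>S a. finite S \<and> S \<subseteq> red R \<and> (\<forall>h\<in>S. a h \<noteq> 0) \<and> v = (\<Sum>h\<in>S. smultv (a h) (bv R h))"
proof -
  have "\<forall>x\<in>ks v. x \<le> ltv v" using ltv_ge by blast
  then show ?thesis using mp[OF mp[OF spec[OF rep_bound[OF R, of "ltv v"]] v]] by blast
qed



definition LT :: "('g::wellorder \<Rightarrow>\<^sub>0 'k::field) set \<Rightarrow> 'g set" where
  "LT V = {ltv v | v. v \<in> V \<and> v \<noteq> 0}"

lemma dec_bound:
  fixes V :: "('g::wellorder \<Rightarrow>\<^sub>0 'k::field) set"
  assumes V: "subsp V"
  shows "\<forall>u. (\<forall>x\<in>ks u. x \<le> g) \<longrightarrow> (\<exists>v r. v \<in> V \<and> u = v + r \<and> ks r \<inter> LT V = {} \<and> (\<forall>x\<in>ks r. x \<le> g))"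
proof (induction g rule: less_induct)
  case (less g)
  have small: "\<exists>v r. v \<in> V \<and> u' = v + r \<and> ks r \<inter> LT V = {} \<and> (\<forall>x\<in>ks r. x < g)"
    if u': "\<forall>x\<in>ks u'. x < g" for u'
  proof (cases "u' = 0")
    case True then show ?thesis using subsp_zero[OF V] by (intro exI[of _ 0]) simp
  next
    case False
    have lt: "ltv u' < g" using u' ltv_in[OF False] by blast
    have "\<forall>x\<in>ks u'. x \<le> ltv u'" using ltv_ge by blast
    then have "\<exists>v r. v \<in> V \<and> u' = v + r \<and> ks r \<inter> LT V = {} \<and> (\<forall>x\<in>ks r. x \<le> ltv u')"
      using mp[OF spec[OF less.IH[OF lt], of u']] by blast
    then obtain v r where vr: "v \<in> V" "u' = v + r" "ks r \<inter> LT V = {}" "\<forall>x\<in>ks r. x \<le> ltv u'"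
      by blast
    have "\<forall>x\<in>ks r. x < g" using vr(4) lt by (meson order.strict_trans1)
    then show ?thesis using vr(1-3) by blast
  qed
  show ?case
  proof (intro allI impI)
    fix u :: "'g \<Rightarrow>\<^sub>0 'k" assume u: "\<forall>x\<in>ks u. x \<le> g"
    have uu: "\<And>x. x \<in> ks u \<Longrightarrow> x \<le> g" using u by blast
    show "\<exists>v r. v \<in> V \<and> u = v + r \<and> ks r \<inter> LT V = {} \<and> (\<forall>x\<in>ks r. x \<le> g)"
    proof (cases "g \<in> LT V")
      case True
      then obtain w where w: "w \<in> V" "w \<noteq> 0" "ltv w = g" unfolding LT_def by blast
      let ?b = "lk w g"
      have b: "?b \<noteq> 0" using ltv_in[OF w(2)] w(3) by (metis in_keys_iff)
      let ?w = "smultv (lk u g / ?b) w"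
      have "\<forall>x\<in>ks (u - ?w). x < g"
      proof
        fix x assume x: "x \<in> ks (u - ?w)"
        show "x < g"
        proof (rule diff_keys_lt[OF uu _ _ x])
          show "\<And>y. y \<in> ks ?w \<Longrightarrow> y \<le> g"
          proof -
            fix y assume "y \<in> ks ?w"
            then have "y \<in> ks w" by (rule subsetD[OF keys_smultv])
            then show "y \<le> g" using ltv_ge w(3) by metis
          qed
          show "lk u g = lk ?w g" using b by simp
        qed
      qed
      from small[OF this] obtain v r where vr: "v \<in> V" "u - ?w = v + r" "ks r \<inter> LT V = {}"
        "\<forall>x\<in>ks r. x < g" by blast
      have "u = (v + ?w) + r" using vr(2) by (metis add.commute add.left_commute diff_add_cancel)
      moreover have "v + ?w \<in> V" using subsp_add[OF V vr(1) subsp_smult[OF V w(1)]] .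
      moreover have "\<forall>x\<in>ks r. x \<le> g" using vr(4) by (meson less_imp_le)
      ultimately show ?thesis using vr(3) by blast
    next
      case False
      let ?w = "smultv (lk u g) (basisv g)"
      have "\<forall>x\<in>ks (u - ?w). x < g"
      proof
        fix x assume x: "x \<in> ks (u - ?w)"
        show "x < g"
        proof (rule diff_keys_lt[OF uu _ _ x])
          show "\<And>y. y \<in> ks ?w \<Longrightarrow> y \<le> g"
          proof -
            fix y assume "y \<in> ks ?w"
            then have "y \<in> ks (basisv g :: 'g \<Rightarrow>\<^sub>0 'k)" by (rule subsetD[OF keys_smultv])
            then show "y \<le> g" by simp
          qed
          show "lk u g = lk ?w g" by (simp add: lookup_basisv)
        qed
      qed
      from small[OF this] obtain v r where vr: "v \<in> V" "u - ?w = v + r" "ks r \<inter> LT V = {}"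
        "\<forall>x\<in>ks r. x < g" by blast
      have "u = v + (r + ?w)" using vr(2) by (metis add.assoc diff_add_cancel)
      moreover have kr: "ks (r + ?w) \<subseteq> ks r \<union> {g}"
      proof -
        have "ks ?w \<subseteq> {g}" using keys_smultv[of "lk u g" "basisv g :: 'g \<Rightarrow>\<^sub>0 'k"] by simp
        then show ?thesis using keys_add[of r ?w] by blast
      qed
      then have "ks (r + ?w) \<inter> LT V = {}" using vr(3) False by blast
      moreover have "\<forall>x\<in>ks (r + ?w). x \<le> g" using kr vr(4) by (metis Un_iff insertE less_imp_le order_refl singletonD subsetD)
      ultimately show ?thesis using vr(1) by blast
    qed
  qed
qed

lemma dec_exists:
  assumes V: "subsp V"
  shows "\<exists>v r. v \<in> V \<and> u = v + r \<and> ks r \<inter> LT V = {}"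
proof -
  have "\<forall>x\<in>ks u. x \<le> ltv u" using ltv_ge by blast
  then show ?thesis using mp[OF spec[OF dec_bound[OF V, of "ltv u"]] ] by blast
qed

lemma dec_unique:
  assumes V: "subsp V" and v: "v1 \<in> V" "v2 \<in> V" and eq: "v1 + r1 = v2 + r2"
    and r: "ks r1 \<inter> LT V = {}" "ks r2 \<inter> LT V = {}"
  shows "r1 = r2"
proof (rule ccontr)
  assume ne: "r1 \<noteq> r2"
  let ?d = "r2 - r1"
  have d: "?d = v1 - v2" using eq by (metis add_diff_cancel_left add_diff_cancel_right diff_diff_eq2 add.commute diff_add_eq)
  have dV: "?d \<in> V" unfolding d by (rule subsp_diff[OF V v])
  have dn: "?d \<noteq> 0" using ne by simp
  have "ltv ?d \<in> LT V" unfolding LT_def using dV dn by blast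
  moreover have "ltv ?d \<in> ks r2 \<union> ks r1" using ltv_in[OF dn] keys_diff'[of r2 r1] by blast
  ultimately show False using r by blast
qed



lemma basisv_nz: "basisv g \<noteq> (0 :: 'g \<Rightarrow>\<^sub>0 'k::field)"
proof
  assume "basisv g = (0 :: 'g \<Rightarrow>\<^sub>0 'k::field)"
  then have "ks (basisv g :: 'g \<Rightarrow>\<^sub>0 'k::field) = {}" by simp
  then show False by simp
qed

definition projV :: "('g::wellorder \<Rightarrow>\<^sub>0 'k::field) set \<Rightarrow> ('g \<Rightarrow>\<^sub>0 'k) \<Rightarrow> ('g \<Rightarrow>\<^sub>0 'k)" where
  "projV V u = (THE r. \<exists>v\<in>V. u = v + r \<and> ks r \<inter> LT V = {})"

lemma projV_eq:
  assumes V: "subsp V" and v: "v \<in> V" "u = v + r" "ks r \<inter> LT V = {}"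
  shows "projV V u = r"
  unfolding projV_def
proof (rule the_equality)
  show "\<exists>v\<in>V. u = v + r \<and> ks r \<inter> LT V = {}" using v by blast
  fix r' assume "\<exists>v\<in>V. u = v + r' \<and> ks r' \<inter> LT V = {}"
  then obtain v' where "v' \<in> V" "u = v' + r'" "ks r' \<inter> LT V = {}" by blast
  then show "r' = r" using dec_unique[OF V, of v' v r' r] v by metis
qed

lemma projV_prop:
  assumes V: "subsp V"
  shows "\<exists>v\<in>V. u = v + projV V u \<and> ks (projV V u) \<inter> LT V = {}"
proof -
  obtain v r where "v \<in> V" "u = v + r" "ks r \<inter> LT V = {}" using dec_exists[OF V] by blast
  then show ?thesis using projV_eq[OF V] by metis
qed

lemma projV_lin: assumes V: "subsp V" shows "linear_endo (projV V)"
  unfolding linear_endo_def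
proof (intro conjI allI)
  fix u1 u2
  obtain v1 where v1: "v1 \<in> V" "u1 = v1 + projV V u1" "ks (projV V u1) \<inter> LT V = {}"
    using projV_prop[OF V] by blast
  obtain v2 where v2: "v2 \<in> V" "u2 = v2 + projV V u2" "ks (projV V u2) \<inter> LT V = {}"
    using projV_prop[OF V] by blast
  have "u1 + u2 = (v1 + v2) + (projV V u1 + projV V u2)" using v1(2) v2(2)
    by (metis add.assoc add.left_commute)
  moreover have "ks (projV V u1 + projV V u2) \<inter> LT V = {}"
    using keys_add[of "projV V u1" "projV V u2"] v1(3) v2(3) by blast
  ultimately show "projV V (u1 + u2) = projV V u1 + projV V u2"
    using projV_eq[OF V subsp_add[OF V v1(1) v2(1)]] by blast
next
  fix c u
  obtain v where v: "v \<in> V" "u = v + projV V u" "ks (projV V u) \<inter> LT V = {}"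
    using projV_prop[OF V] by blast
  have "smultv c u = smultv c v + smultv c (projV V u)" using v(2) by (metis smultv_add)
  moreover have "ks (smultv c (projV V u)) \<inter> LT V = {}"
    using keys_smultv[of c "projV V u"] v(3) by blast
  ultimately show "projV V (smultv c u) = smultv c (projV V u)"
    using projV_eq[OF V subsp_smult[OF V v(1)]] by blast
qed

lemma projV_idem: assumes V: "subsp V" shows "projV V (projV V u) = projV V u"
proof -
  obtain v where v: "v \<in> V" "u = v + projV V u" "ks (projV V u) \<inter> LT V = {}"
    using projV_prop[OF V] by blast
  show ?thesis using projV_eq[OF V subsp_zero[OF V], of "projV V u" "projV V u"] v(3) by simp
qed

lemma projV_kernel: assumes V: "subsp V" shows "kernel (projV V) = V"
proof
  show "kernel (projV V) \<subseteq> V"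
  proof
    fix u assume "u \<in> kernel (projV V)"
    then have "projV V u = 0" by (simp add: kernel_def)
    then show "u \<in> V" using projV_prop[OF V, of u] by auto
  qed
  show "V \<subseteq> kernel (projV V)"
  proof
    fix u assume "u \<in> V"
    then have "projV V u = 0" using projV_eq[OF V, of u u 0] by simp
    then show "u \<in> kernel (projV V)" by (simp add: kernel_def)
  qed
qed

lemma projV_vle: assumes V: "subsp V"
  shows "vle (projV V (basisv g)) (basisv g :: 'g::wellorder \<Rightarrow>\<^sub>0 'k::field)"
proof -
  have "\<forall>x\<in>ks (basisv g :: 'g \<Rightarrow>\<^sub>0 'k). x \<le> g" by simp
  then obtain v r where vr: "v \<in> V" "basisv g = v + r" "ks r \<inter> LT V = {}" "\<forall>x\<in>ks r. x \<le> g"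
    using mp[OF spec[OF dec_bound[OF V, of g]]] by blast
  have P: "projV V (basisv g) = r" using projV_eq[OF V vr(1-3)] .
  show ?thesis
  proof (cases "r = basisv g")
    case True then show ?thesis using P by (simp add: vle_def)
  next
    case rb: False
    show ?thesis
    proof (cases "r = 0")
      case True then show ?thesis using P basisv_nz[of g] by (simp add: vle_def vless_def)
    next
      case rn: False
      have "ltv r \<noteq> g"
      proof
        assume lg: "ltv r = g"
        then have gr: "g \<in> ks r" using ltv_in[OF rn] by simp
        have vd: "v = basisv g - r" using vr(2) by (metis add_diff_cancel_right')
        have vn: "v \<noteq> 0" using rb vd by simp
        have "ltv v \<in> LT V" unfolding LT_def using vr(1) vn by blast
        moreover have "ltv v \<in> ks (basisv g :: 'g \<Rightarrow>\<^sub>0 'k) \<union> ks r"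
          using ltv_in[OF vn] keys_diff'[of "basisv g" r] vd by blast
        ultimately have "ltv v = g" using vr(3) by auto
        then show False using gr vr(3) \<open>ltv v \<in> LT V\<close> by blast
      qed
      then have "ltv r < g" using vr(4) ltv_in[OF rn] by (meson order.not_eq_order_implies_strict)
      then show ?thesis using P rn basisv_nz[of g] by (simp add: vle_def vless_def)
    qed
  qed
qed

lemma projV_ro: assumes V: "subsp V" shows "reduction_operator (projV V)"
  unfolding reduction_operator_def using projV_lin[OF V] projV_idem[OF V] projV_vle[OF V] by blast

lemma ro_unique: assumes V: "subsp V" and R: "reduction_operator R" and k: "kernel R = V"
  shows "R = projV V"
proof
  fix u
  have "R (u - R u) = 0" by (simp add: lin_diff[OF ro_lin[OF R]] ro_idem[OF R])
  then have "u - R u \<in> V" using k unfolding kernel_def by blast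
  moreover have "LT V \<subseteq> red R"
  proof
    fix g assume "g \<in> LT V"
    then obtain w where "w \<in> V" "w \<noteq> 0" "g = ltv w" unfolding LT_def by blast
    then show "g \<in> red R" using ro_kernel_lt[OF R] k by (auto simp: kernel_def)
  qed
  then have "ks (R u) \<inter> LT V = {}" using ro_image[OF R, of u] by blast
  ultimately show "R u = projV V u" using projV_eq[OF V, of "u - R u" u "R u"] by simp
qed

lemma ker_inv_spec: assumes V: "subsp V"
  shows "reduction_operator (ker_inv V)" "kernel (ker_inv V) = V"
proof -
  have "ker_inv V = projV V" unfolding ker_inv_def
  proof (rule the_equality)
    show "reduction_operator (projV V) \<and> kernel (projV V) = V" using projV_ro[OF V] projV_kernel[OF V] by blast
    fix T assume "reduction_operator T \<and> kernel T = V"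
    then show "T = projV V" using ro_unique[OF V] by blast
  qed
  then show "reduction_operator (ker_inv V)" "kernel (ker_inv V) = V"
    using projV_ro[OF V] projV_kernel[OF V] by simp_all
qed



lemma subsp_Int: "subsp U \<Longrightarrow> subsp V \<Longrightarrow> subsp (U \<inter> V)"
  unfolding subsp_def by blast

lemma sum_kernels_subsp:
  assumes L: "\<And>j. j \<in> I \<Longrightarrow> linear_endo (T j)"
  shows "subsp (sum_kernels T I)"
  unfolding subsp_def
proof (intro conjI ballI allI)
  show "0 \<in> sum_kernels T I" unfolding sum_kernels_def
    by (rule CollectI, rule exI[of _ "\<lambda>_. 0"]) (simp add: kernel_def lin_zero[OF L])
next
  fix u v assume u: "u \<in> sum_kernels T I" and v: "v \<in> sum_kernels T I"
  obtain f where f: "\<forall>j\<in>I. f j \<in> kernel (T j)" "u = (\<Sum>j\<in>I. f j)" using u unfolding sum_kernels_def by blast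
  obtain f' where f': "\<forall>j\<in>I. f' j \<in> kernel (T j)" "v = (\<Sum>j\<in>I. f' j)" using v unfolding sum_kernels_def by blast
  have "\<forall>j\<in>I. f j + f' j \<in> kernel (T j)" using f(1) f'(1) subsp_add[OF kernel_subsp[OF L]] by blast
  moreover have "u + v = (\<Sum>j\<in>I. f j + f' j)" using f(2) f'(2) by (simp add: sum.distrib)
  ultimately show "u + v \<in> sum_kernels T I" unfolding sum_kernels_def
    by (intro CollectI exI[of _ "\<lambda>j. f j + f' j"]) blast
next
  fix c v assume v: "v \<in> sum_kernels T I"
  obtain f where f: "\<forall>j\<in>I. f j \<in> kernel (T j)" "v = (\<Sum>j\<in>I. f j)" using v unfolding sum_kernels_def by blast
  have "\<forall>j\<in>I. smultv c (f j) \<in> kernel (T j)" using f(1) subsp_smult[OF kernel_subsp[OF L]] by blast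
  moreover have "smultv c v = (\<Sum>j\<in>I. smultv c (f j))" using f(2) by (simp add: smultv_sum)
  ultimately show "smultv c v \<in> sum_kernels T I" unfolding sum_kernels_def
    by (intro CollectI exI[of _ "\<lambda>j. smultv c (f j)"]) blast
qed

lemma join_facts:
  assumes A: "\<forall>i\<in>{1..n}. reduction_operator (T i)" and i: "1 \<le> i" "i \<le> n"
  shows "reduction_operator (join_op (meet_ops T {1..i-1}) (T i))"
    "kernel (join_op (meet_ops T {1..i-1}) (T i)) = sum_kernels T {1..i-1} \<inter> kernel (T i)"
proof -
  have L: "\<And>j. j \<in> {1..i-1} \<Longrightarrow> linear_endo (T j)"
  proof -
    fix j assume "j \<in> {1..i-1}"
    then have "j \<in> {1..n}" using i by auto
    then show "linear_endo (T j)" using A ro_lin by blast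
  qed
  have S: "subsp (sum_kernels T {1..i-1})" by (rule sum_kernels_subsp[OF L])
  have Ti: "reduction_operator (T i)" using A i by auto
  have kU: "kernel (meet_ops T {1..i-1}) = sum_kernels T {1..i-1}"
    unfolding meet_ops_def using ker_inv_spec(2)[OF S] .
  have S2: "subsp (kernel (meet_ops T {1..i-1}) \<inter> kernel (T i))"
    unfolding kU by (rule subsp_Int[OF S kernel_subsp[OF ro_lin[OF Ti]]])
  show "reduction_operator (join_op (meet_ops T {1..i-1}) (T i))"
    unfolding join_op_def by (rule ker_inv_spec(1)[OF S2])
  show "kernel (join_op (meet_ops T {1..i-1}) (T i)) = sum_kernels T {1..i-1} \<inter> kernel (T i)"
    using ker_inv_spec(2)[OF S2] unfolding join_op_def kU .
qed

lemma e_vec_bv: "e_vec T i g j = (if j = i then bv (T j) g else 0)"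
  unfolding e_vec_def bv_def by simp

lemma coords_eval:
  assumes fin: "finite C"
  shows "(\<Sum>p\<in>C. smultv (c p) (e_vec T (fst p) (snd p) j)) = (\<Sum>h\<in>{h. (j,h) \<in> C}. smultv (c (j,h)) (bv (T j) h))"
proof -
  have "(\<Sum>p\<in>C. smultv (c p) (e_vec T (fst p) (snd p) j)) = (\<Sum>p\<in>C. if fst p = j then smultv (c p) (bv (T j) (snd p)) else 0)"
    by (rule sum.cong) (auto simp: e_vec_bv)
  also have "\<dots> = (\<Sum>p\<in>{p\<in>C. fst p = j}. smultv (c p) (bv (T j) (snd p)))"
    using sum.inter_filter[OF fin, symmetric] .
  also have "{p\<in>C. fst p = j} = (\<lambda>h. (j,h)) ` {h. (j,h) \<in> C}" by auto
  also have "(\<Sum>p\<in>(\<lambda>h. (j,h)) ` {h. (j,h) \<in> C}. smultv (c p) (bv (T j) (snd p))) = (\<Sum>h\<in>{h. (j,h) \<in> C}. smultv (c (j,h)) (bv (T j) h))"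
    by (subst sum.reindex) (auto simp: inj_on_def)
  finally show ?thesis .
qed

lemma sum_split_i:
  fixes w :: "nat \<Rightarrow> ('g \<Rightarrow>\<^sub>0 'k::field)"
  assumes i: "1 \<le> i" "i \<le> n" and z: "\<And>j. i < j \<Longrightarrow> w j = 0"
  shows "(\<Sum>j\<in>{1..n}. w j) = w i + (\<Sum>j\<in>{1..i-1}. w j)"
proof -
  have "(\<Sum>j\<in>{1..n}. w j) = (\<Sum>j\<in>{1..i}. w j)"
    by (rule sum.mono_neutral_right) (use i z in auto)
  also have "{1..i} = insert i {1..i-1}" using i by auto
  also have "(\<Sum>j\<in>insert i {1..i-1}. w j) = w i + (\<Sum>j\<in>{1..i-1}. w j)"
    by (rule sum.insert) (use i in auto)
  finally show ?thesis .
qed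



lemma dir1:
  fixes T :: "nat \<Rightarrow> (('g::wellorder \<Rightarrow>\<^sub>0 'k::field) \<Rightarrow> ('g \<Rightarrow>\<^sub>0 'k))" and n :: nat
  assumes A: "\<forall>i\<in>{1..n}. reduction_operator (T i)"
    and w: "w \<in> syz T n" and co: "coords T n c w" and ci: "c (i, g) \<noteq> 0"
    and mx: "\<forall>p. c p \<noteq> 0 \<longrightarrow> p \<noteq> (i, g) \<longrightarrow> sqsub p (i, g)"
  shows "2 \<le> i \<and> i \<le> n \<and> g \<in> red (join_op (meet_ops T {1..i-1}) (T i))"
proof -
  let ?C = "{p. c p \<noteq> 0}"
  have fin: "finite ?C" and sub: "?C \<subseteq> {(j, h). j \<in> {1..n} \<and> h \<in> red (T j)}"
    and weq: "w = (\<lambda>j. \<Sum>p\<in>?C. smultv (c p) (e_vec T (fst p) (snd p) j))"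
    using co unfolding coords_def by blast+
  have wj: "w j = (\<Sum>h\<in>{h. (j,h) \<in> ?C}. smultv (c (j,h)) (bv (T j) h))" for j
    by (subst weq) (rule coords_eval[OF fin])
  have iC: "(i, g) \<in> ?C" using ci by simp
  then have i1: "1 \<le> i" and iN: "i \<le> n" and gred: "g \<in> red (T i)" using sub by auto
  have Ti: "reduction_operator (T i)" using A i1 iN by auto
  have zero: "w j = 0" if "i < j" for j
  proof -
    have "{h. (j,h) \<in> ?C} = {}"
    proof (rule ccontr)
      assume "{h. (j,h) \<in> ?C} \<noteq> {}"
      then obtain h where "c (j,h) \<noteq> 0" by blast
      moreover have "(j,h) \<noteq> (i,g)" using that by simp
      ultimately have "sqsub (j,h) (i,g)" using mx by blast
      then show False using that by (simp add: sqsub_def)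
    qed
    then show ?thesis using wj[of j] by simp
  qed
  let ?S = "{h. (i,h) \<in> ?C}"
  have Sfin: "finite ?S"
  proof -
    have "?S \<subseteq> snd ` ?C" by force
    then show ?thesis using fin by (meson finite_imageI finite_subset)
  qed
  have gS: "g \<in> ?S" using iC by simp
  have Ssub: "?S \<subseteq> red (T i)" using sub by auto
  have Smax: "Max ?S = g"
  proof (rule Max_eqI[OF Sfin _ gS])
    fix h assume h: "h \<in> ?S"
    show "h \<le> g"
    proof (cases "h = g")
      case False
      then have "sqsub (i,h) (i,g)" using mx h by auto
      then show ?thesis by (simp add: sqsub_def)
    qed simp
  qed
  have Sne: "?S \<noteq> {}" using gS by blast
  have nz: "\<And>h. h \<in> ?S \<Longrightarrow> c (i,h) \<noteq> 0" by blast
  note LS = lead_sum[OF Ti Sfin Sne Ssub nz wj[of i]]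
  have wi_nz: "w i \<noteq> 0" by (rule LS(1))
  have wi_lt: "ltv (w i) = Max ?S" by (rule LS(2))
  have ker: "w \<in> kerF T n" and ssum: "(\<Sum>j\<in>{1..n}. w j) = 0" using w unfolding syz_def by auto
  have sp: "w i + (\<Sum>j\<in>{1..i-1}. w j) = 0" using sum_split_i[OF i1 iN zero] ssum by simp
  have i2: "2 \<le> i"
  proof (rule ccontr)
    assume "\<not> 2 \<le> i"
    then have "i = 1" using i1 by simp
    then show False using sp wi_nz by simp
  qed
  have wiK: "w i \<in> kernel (T i)" using ker i1 iN unfolding kerF_def by auto
  have "w i \<in> sum_kernels T {1..i-1}"
  proof -
    have "\<forall>j\<in>{1..i-1}. - w j \<in> kernel (T j)"
    proof
      fix j assume j: "j \<in> {1..i-1}"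
      then have jn: "j \<in> {1..n}" using iN by auto
      then have "w j \<in> kernel (T j)" using ker unfolding kerF_def by blast
      then show "- w j \<in> kernel (T j)" using subsp_neg[OF kernel_subsp[OF ro_lin]] A jn by blast
    qed
    moreover have "w i = (\<Sum>j\<in>{1..i-1}. - w j)" using sp
      by (simp add: sum_negf eq_neg_iff_add_eq_0)
    ultimately show ?thesis unfolding sum_kernels_def
      by (intro CollectI exI[of _ "\<lambda>j. - w j"]) blast
  qed
  then have "w i \<in> kernel (join_op (meet_ops T {1..i-1}) (T i))"
    using join_facts(2)[OF A i1 iN] wiK by blast
  then have "ltv (w i) \<in> red (join_op (meet_ops T {1..i-1}) (T i))"
    using ro_kernel_lt[OF join_facts(1)[OF A i1 iN]] wi_nz unfolding kernel_def by blast
  then show ?thesis using i2 iN wi_lt Smax by simp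
qed



lemma dir2:
  fixes T :: "nat \<Rightarrow> (('g::wellorder \<Rightarrow>\<^sub>0 'k::field) \<Rightarrow> ('g \<Rightarrow>\<^sub>0 'k))" and n :: nat
  assumes A: "\<forall>i\<in>{1..n}. reduction_operator (T i)"
    and i2: "2 \<le> i" and iN: "i \<le> n" and g0: "g0 \<in> red (join_op (meet_ops T {1..i-1}) (T i))"
  shows "\<exists>w\<in>syz T n. (\<exists>j. w j \<noteq> 0) \<and> (\<exists>c. coords T n c w \<and> c (i, g0) \<noteq> 0 \<and>
       (\<forall>p. c p \<noteq> 0 \<longrightarrow> p \<noteq> (i, g0) \<longrightarrow> sqsub p (i, g0)))"
proof -
  have i1: "1 \<le> i" using i2 by simp
  let ?J = "join_op (meet_ops T {1..i-1}) (T i)"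
  have J: "reduction_operator ?J" by (rule join_facts(1)[OF A i1 iN])
  define v where "v = bv ?J g0"
  have Jv: "?J v = 0" unfolding v_def by (rule bv_ker[OF J])
  have g0v: "g0 \<in> ks v" unfolding v_def using bv_diag[OF J g0] by (metis in_keys_iff one_neq_zero)
  have vnz: "v \<noteq> 0" using g0v by (metis keys_zero empty_iff)
  have vlt: "ltv v = g0" using g0v bv_keys[OF J] unfolding v_def by (rule ltv_eqI)
  have "v \<in> kernel ?J" using Jv unfolding kernel_def by blast
  then have vK: "v \<in> sum_kernels T {1..i-1}" "v \<in> kernel (T i)" using join_facts(2)[OF A i1 iN] by blast+
  then obtain f where f: "\<forall>j\<in>{1..i-1}. f j \<in> kernel (T j)" "v = (\<Sum>j\<in>{1..i-1}. f j)"
    unfolding sum_kernels_def by blast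
  define w where "w = (\<lambda>j. if j = i then v else if j \<in> {1..i-1} then - f j else 0)"
  have wi: "w i = v" unfolding w_def by simp
  have wK: "w j \<in> kernel (T j)" if j: "j \<in> {1..i}" for j
  proof (cases "j = i")
    case True then show ?thesis using wi vK(2) by simp
  next
    case False
    then have j': "j \<in> {1..i-1}" using j by auto
    then have "j \<in> {1..n}" using iN by auto
    then have "subsp (kernel (T j))" using A kernel_subsp ro_lin by blast
    then have "- f j \<in> kernel (T j)" using subsp_neg f(1) j' by blast
    then show ?thesis using False j' unfolding w_def by simp
  qed
  have wz: "w j = 0" if "j \<notin> {1..i}" for j using that i1 unfolding w_def by auto
  have kerw: "w \<in> kerF T n"
    unfolding kerF_def
  proof (intro CollectI conjI ballI allI impI)
    fix j assume j: "j \<in> {1..n}"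
    show "w j \<in> kernel (T j)"
    proof (cases "j \<in> {1..i}")
      case True then show ?thesis by (rule wK)
    next
      case False then have "w j = 0" by (rule wz)
      moreover have "subsp (kernel (T j))" using A j kernel_subsp ro_lin by blast
      ultimately show ?thesis using subsp_zero by metis
    qed
  next
    fix j :: nat assume "j \<notin> {1..n}"
    then have "j \<notin> {1..i}" using iN by auto
    then show "w j = 0" by (rule wz)
  qed
  have "(\<Sum>j\<in>{1..n}. w j) = w i + (\<Sum>j\<in>{1..i-1}. w j)"
    by (rule sum_split_i[OF i1 iN]) (simp add: wz)
  also have "(\<Sum>j\<in>{1..i-1}. w j) = (\<Sum>j\<in>{1..i-1}. - f j)"
    by (rule sum.cong) (auto simp: w_def)
  also have "w i + \<dots> = 0" using f(2) wi by (simp add: sum_negf)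
  finally have "(\<Sum>j\<in>{1..n}. w j) = 0" .
  then have wsyz: "w \<in> syz T n" using kerw unfolding syz_def by blast
  have "\<forall>j\<in>{1..i}. \<exists>S a. finite S \<and> S \<subseteq> red (T j) \<and> (\<forall>h\<in>S. a h \<noteq> 0) \<and> w j = (\<Sum>h\<in>S. smultv (a h) (bv (T j) h))"
  proof
    fix j assume j: "j \<in> {1..i}"
    then have "reduction_operator (T j)" using A iN by auto
    moreover have "T j (w j) = 0" using wK[OF j] unfolding kernel_def by blast
    ultimately show "\<exists>S a. finite S \<and> S \<subseteq> red (T j) \<and> (\<forall>h\<in>S. a h \<noteq> 0) \<and> w j = (\<Sum>h\<in>S. smultv (a h) (bv (T j) h))"
      by (rule rep_exists)
  qed
  then obtain S where "\<forall>j\<in>{1..i}. \<exists>a. finite (S j) \<and> S j \<subseteq> red (T j) \<and> (\<forall>h\<in>S j. a h \<noteq> 0) \<and> w j = (\<Sum>h\<in>S j. smultv (a h) (bv (T j) h))"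
    by (rule bchoice[elim_format]) blast
  then obtain a where Sa: "\<forall>j\<in>{1..i}. finite (S j) \<and> S j \<subseteq> red (T j) \<and> (\<forall>h\<in>S j. a j h \<noteq> 0) \<and> w j = (\<Sum>h\<in>S j. smultv (a j h) (bv (T j) h))"
    by (rule bchoice[elim_format]) blast
  define c where "c = (\<lambda>p. if fst p \<in> {1..i} \<and> snd p \<in> S (fst p) then a (fst p) (snd p) else 0)"
  have Ceq: "{p. c p \<noteq> 0} = Sigma {1..i} S"
    using Sa unfolding c_def by auto
  have cfin: "finite {p. c p \<noteq> 0}" unfolding Ceq using Sa by (intro finite_SigmaI) auto
  have csub: "{p. c p \<noteq> 0} \<subseteq> {(j, h). j \<in> {1..n} \<and> h \<in> red (T j)}"
    unfolding Ceq using Sa iN by auto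
  have weq: "w = (\<lambda>j. \<Sum>p\<in>{p. c p \<noteq> 0}. smultv (c p) (e_vec T (fst p) (snd p) j))"
  proof
    fix j
    have "(\<Sum>p\<in>{p. c p \<noteq> 0}. smultv (c p) (e_vec T (fst p) (snd p) j)) =
       (\<Sum>h\<in>{h. (j,h) \<in> {p. c p \<noteq> 0}}. smultv (c (j,h)) (bv (T j) h))"
      by (rule coords_eval[OF cfin])
    also have "\<dots> = w j"
    proof (cases "j \<in> {1..i}")
      case True
      have "{h. (j,h) \<in> {p. c p \<noteq> 0}} = S j" unfolding Ceq using True by auto
      moreover have "\<And>h. h \<in> S j \<Longrightarrow> c (j,h) = a j h" using True unfolding c_def by simp
      ultimately show ?thesis using Sa True by (metis (no_types, lifting) sum.cong)
    next
      case False
      have "{h. (j,h) \<in> {p. c p \<noteq> 0}} = {}" unfolding Ceq using False by auto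
      then show ?thesis using wz[OF False] by simp
    qed
    finally show "w j = (\<Sum>p\<in>{p. c p \<noteq> 0}. smultv (c p) (e_vec T (fst p) (snd p) j))" by simp
  qed
  have co: "coords T n c w" unfolding coords_def using cfin csub weq by blast
  have iI: "i \<in> {1..i}" using i1 by simp
  have Si: "finite (S i)" "S i \<subseteq> red (T i)" "\<forall>h\<in>S i. a i h \<noteq> 0" "w i = (\<Sum>h\<in>S i. smultv (a i h) (bv (T i) h))"
    using Sa iI by blast+
  have Sne: "S i \<noteq> {}"
  proof
    assume "S i = {}"
    then have "w i = 0" using Si(4) by simp
    then show False using wi vnz by simp
  qed
  have Ti: "reduction_operator (T i)" using A i1 iN by auto
  have "ltv (w i) = Max (S i)"
    by (rule lead_sum(2)[OF Ti Si(1) Sne Si(2) _ Si(4)]) (use Si(3) in blast)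
  then have Mx: "Max (S i) = g0" using wi vlt by simp
  have g0S: "g0 \<in> S i" using Max_in[OF Si(1) Sne] Mx by simp
  have c0: "c (i, g0) \<noteq> 0" unfolding c_def using iI g0S Si(3) by simp
  have mx: "\<forall>p. c p \<noteq> 0 \<longrightarrow> p \<noteq> (i, g0) \<longrightarrow> sqsub p (i, g0)"
  proof (intro allI impI)
    fix p assume p: "c p \<noteq> 0" "p \<noteq> (i, g0)"
    then have pS: "p \<in> Sigma {1..i} S" using Ceq by blast
    obtain j h where jh: "p = (j,h)" by (cases p)
    then have j: "j \<in> {1..i}" "h \<in> S j" using pS by auto
    show "sqsub p (i, g0)"
    proof (cases "j = i")
      case True
      then have "h \<le> g0" using j(2) Mx Max_ge[OF Si(1)] by blast
      moreover have "h \<noteq> g0" using p(2) jh True by simp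
      ultimately show ?thesis using jh True by (simp add: sqsub_def)
    next
      case False then show ?thesis using jh j(1) by (simp add: sqsub_def)
    qed
  qed
  show ?thesis using wsyz wi vnz co c0 mx by blast
qed


theorem mainTheorem6:
  fixes T :: "nat \<Rightarrow> (('g::wellorder \<Rightarrow>\<^sub>0 'k::field) \<Rightarrow> ('g \<Rightarrow>\<^sub>0 'k))" and n :: nat
  assumes "\<forall>i\<in>{1..n}. reduction_operator (T i)"
  shows "lt_syz T n =
    {e_vec T i g0 | i g0. 2 \<le> i \<and> i \<le> n \<and> g0 \<in> red (join_op (meet_ops T {1..i-1}) (T i))}"
proof (rule equalityI)
  show "lt_syz T n \<subseteq> {e_vec T i g0 | i g0. 2 \<le> i \<and> i \<le> n \<and> g0 \<in> red (join_op (meet_ops T {1..i-1}) (T i))}"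
  proof
    fix x assume "x \<in> lt_syz T n"
    then obtain i g w c where x: "x = e_vec T i g" and w: "w \<in> syz T n" and co: "coords T n c w"
      and ci: "c (i, g) \<noteq> 0" and mx: "\<forall>p. c p \<noteq> 0 \<longrightarrow> p \<noteq> (i, g) \<longrightarrow> sqsub p (i, g)"
      unfolding lt_syz_def by blast
    have "2 \<le> i \<and> i \<le> n \<and> g \<in> red (join_op (meet_ops T {1..i-1}) (T i))"
      by (rule dir1[OF assms w co ci mx])
    then show "x \<in> {e_vec T i g0 | i g0. 2 \<le> i \<and> i \<le> n \<and> g0 \<in> red (join_op (meet_ops T {1..i-1}) (T i))}"
      using x by blast
  qed
  show "{e_vec T i g0 | i g0. 2 \<le> i \<and> i \<le> n \<and> g0 \<in> red (join_op (meet_ops T {1..i-1}) (T i))} \<subseteq> lt_syz T n"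
  proof
    fix x assume "x \<in> {e_vec T i g0 | i g0. 2 \<le> i \<and> i \<le> n \<and> g0 \<in> red (join_op (meet_ops T {1..i-1}) (T i))}"
    then obtain i g0 where x: "x = e_vec T i g0" and i: "2 \<le> i" "i \<le> n"
      and g0: "g0 \<in> red (join_op (meet_ops T {1..i-1}) (T i))" by blast
    have "\<exists>w\<in>syz T n. (\<exists>j. w j \<noteq> 0) \<and> (\<exists>c. coords T n c w \<and> c (i, g0) \<noteq> 0 \<and>
       (\<forall>p. c p \<noteq> 0 \<longrightarrow> p \<noteq> (i, g0) \<longrightarrow> sqsub p (i, g0)))"
      by (rule dir2[OF assms i g0])
    then show "x \<in> lt_syz T n" unfolding lt_syz_def using x by blast
  qed
qed

end
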